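(* Let $G$ be a connected graph in $\mathcal{C}$ and $C$ an induced $C_5$ in $G$ with vertices $0,\dots,4$ in cyclic order. Suppose that for some $i$ the sets $X_i, X_{i+1}, X_{i+2}$ are all nonempty, and let $\{j,k,\ell\}=\{i,i+1,i+2\}$. If $|X_j|\ge 3$, then $|X_k|=|X_\ell|=1$.
   Context: $\mathcal{C}=\mathrm{Free}(\text{claw}, 4K_1, \text{5-wheel}, C_5\text{-twin}, P_5\text{-twin}, K_5-e)$, where $\mathrm{Free}(L)$ is the class of graphs with no induced subgraph isomorphic to a member of $L$; the claw is $K_{1,3}$; $4K_1$ is the edgeless graph on 4 vertices; the 5-wheel is $C_5$ plus a vertex adjacent to all five cycle vertices; the $C_5$-twin is $C_5$ plus a new vertex adjacent to one cycle vertex $v$ and both cycle-neighbours of $v$; the $P_5$-twin is a path $p_1p_2p_3p_4p_5$ plus a new vertex adjacent to exactly $p_2,p_3,p_4$; $K_5-e$ is $K_5$ minus one edge. Given an induced cycle $C$ of length 5 with vertices $0,\dots,4$ in cyclic order (indices taken mod 5): $R$ is the set of vertices outside $C$ with no neighbour in $C$; $X_j$ is the set of vertices outside $C$ whose neighbourhood in $C$ is exactly $\{j,j+1\}$; $Y_j$ is the set of vertices outside $C$ whose neighbourhood in $C$ is exactly $\{j,j+1,j+2,j+3\}$; $X=\bigcup_j X_j$, $Y=\bigcup_j Y_j$. *)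

theory Defs
  imports Main
begin

definition graph :: "'a set \<Rightarrow> ('a \<Rightarrow> 'a \<Rightarrow> bool) \<Rightarrow> bool" where
  "graph V E \<longleftrightarrow> finite V \<and> (\<forall>a b. E a b \<longrightarrow> E b a) \<and> (\<forall>a. \<not> E a a)
     \<and> (\<forall>a b. E a b \<longrightarrow> a \<in> V \<and> b \<in> V)"

definition connected_graph :: "'a set \<Rightarrow> ('a \<Rightarrow> 'a \<Rightarrow> bool) \<Rightarrow> bool" where
  "connected_graph V E \<longleftrightarrow> graph V E \<and> V \<noteq> {} \<and>
     (\<forall>u\<in>V. \<forall>v\<in>V. (u, v) \<in> {(a, b). E a b}\<^sup>*)"

(* Small pattern graphs on vertex set {0..<n}, given by a list of (unordered) edges. *)
definition sym_edges :: "(nat \<times> nat) list \<Rightarrow> nat \<Rightarrow> nat \<Rightarrow> bool" where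
  "sym_edges L a b \<longleftrightarrow> (a, b) \<in> set L \<or> (b, a) \<in> set L"

definition has_induced :: "'a set \<Rightarrow> ('a \<Rightarrow> 'a \<Rightarrow> bool) \<Rightarrow> nat \<Rightarrow> (nat \<Rightarrow> nat \<Rightarrow> bool) \<Rightarrow> bool" where
  "has_induced V E n H \<longleftrightarrow> (\<exists>f. inj_on f {..<n} \<and> f ` {..<n} \<subseteq> V \<and>
      (\<forall>a<n. \<forall>b<n. E (f a) (f b) \<longleftrightarrow> H a b))"

definition claw :: "nat \<Rightarrow> nat \<Rightarrow> bool" where
  "claw = sym_edges [(0,1),(0,2),(0,3)]"

definition fourK1 :: "nat \<Rightarrow> nat \<Rightarrow> bool" where
  "fourK1 = sym_edges []"

definition wheel5 :: "nat \<Rightarrow> nat \<Rightarrow> bool" where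
  "wheel5 = sym_edges [(0,1),(1,2),(2,3),(3,4),(4,0),(5,0),(5,1),(5,2),(5,3),(5,4)]"

definition C5_twin :: "nat \<Rightarrow> nat \<Rightarrow> bool" where
  "C5_twin = sym_edges [(0,1),(1,2),(2,3),(3,4),(4,0),(5,4),(5,0),(5,1)]"

definition P5_twin :: "nat \<Rightarrow> nat \<Rightarrow> bool" where
  "P5_twin = sym_edges [(0,1),(1,2),(2,3),(3,4),(5,1),(5,2),(5,3)]"

definition K5_minus_e :: "nat \<Rightarrow> nat \<Rightarrow> bool" where
  "K5_minus_e = sym_edges [(0,2),(0,3),(0,4),(1,2),(1,3),(1,4),(2,3),(2,4),(3,4)]"

definition in_class_C :: "'a set \<Rightarrow> ('a \<Rightarrow> 'a \<Rightarrow> bool) \<Rightarrow> bool" where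
  "in_class_C V E \<longleftrightarrow> graph V E \<and>
     \<not> has_induced V E 4 claw \<and> \<not> has_induced V E 4 fourK1 \<and>
     \<not> has_induced V E 6 wheel5 \<and> \<not> has_induced V E 6 C5_twin \<and>
     \<not> has_induced V E 6 P5_twin \<and> \<not> has_induced V E 5 K5_minus_e"

definition induced_C5 :: "'a set \<Rightarrow> ('a \<Rightarrow> 'a \<Rightarrow> bool) \<Rightarrow> (nat \<Rightarrow> 'a) \<Rightarrow> bool" where
  "induced_C5 V E c \<longleftrightarrow> inj_on c {..<5} \<and> c ` {..<5} \<subseteq> V \<and>
     (\<forall>i<5. \<forall>j<5. E (c i) (c j) \<longleftrightarrow> (j = (i + 1) mod 5 \<or> i = (j + 1) mod 5))"

definition Xset :: "'a set \<Rightarrow> ('a \<Rightarrow> 'a \<Rightarrow> bool) \<Rightarrow> (nat \<Rightarrow> 'a) \<Rightarrow> nat \<Rightarrow> 'a set" where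
  "Xset V E c j = {v \<in> V - c ` {..<5}.
      {u \<in> c ` {..<5}. E v u} = {c (j mod 5), c ((j + 1) mod 5)}}"

end

theory Submission
  imports Defs
begin



lemma all6: "(\<forall>a<(6::nat). P a) \<longleftrightarrow> P 0 \<and> P 1 \<and> P 2 \<and> P 3 \<and> P 4 \<and> P 5"
proof
  assume "P 0 \<and> P 1 \<and> P 2 \<and> P 3 \<and> P 4 \<and> P 5"
  moreover have "\<And>a::nat. a < 6 \<Longrightarrow> a = 0 \<or> a = 1 \<or> a = 2 \<or> a = 3 \<or> a = 4 \<or> a = 5" by arith
  ultimately show "\<forall>a<(6::nat). P a" by blast
qed simp
lemma all5: "(\<forall>a<(5::nat). P a) \<longleftrightarrow> P 0 \<and> P 1 \<and> P 2 \<and> P 3 \<and> P 4"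
proof
  assume "P 0 \<and> P 1 \<and> P 2 \<and> P 3 \<and> P 4"
  moreover have "\<And>a::nat. a < 5 \<Longrightarrow> a = 0 \<or> a = 1 \<or> a = 2 \<or> a = 3 \<or> a = 4" by arith
  ultimately show "\<forall>a<(5::nat). P a" by blast
qed simp
lemma all4: "(\<forall>a<(4::nat). P a) \<longleftrightarrow> P 0 \<and> P 1 \<and> P 2 \<and> P 3"
proof
  assume "P 0 \<and> P 1 \<and> P 2 \<and> P 3"
  moreover have "\<And>a::nat. a < 4 \<Longrightarrow> a = 0 \<or> a = 1 \<or> a = 2 \<or> a = 3" by arith
  ultimately show "\<forall>a<(4::nat). P a" by blast
qed simp

lemma hasI:
  assumes "distinct vs" "set vs \<subseteq> V" "length vs = n"
    and "\<forall>a<n. \<forall>b<n. E (vs ! a) (vs ! b) \<longleftrightarrow> H a b"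
  shows "has_induced V E n H"
  unfolding has_induced_def
proof (rule exI[of _ "\<lambda>a. vs ! a"], intro conjI)
  show "inj_on (\<lambda>a. vs ! a) {..<n}" using assms by (auto intro: inj_on_nth)
  show "(\<lambda>a. vs ! a) ` {..<n} \<subseteq> V" using assms by auto
qed (use assms in auto)

lemma symE: "in_class_C V E \<Longrightarrow> E a b \<Longrightarrow> E b a"
  unfolding in_class_C_def graph_def by blast

lemma nsym: "in_class_C V E \<Longrightarrow> \<not> E a b \<Longrightarrow> \<not> E b a"
  using symE[of V E b a] by blast

lemma irrE: "in_class_C V E \<Longrightarrow> \<not> E a a"
  unfolding in_class_C_def graph_def by blast

lemma no_claw:
  assumes G: "in_class_C V E" and D: "distinct [a,b,c,d]" and S: "set [a,b,c,d] \<subseteq> V"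
    and p0: "E a b" and p1: "E a c" and p2: "E a d" and n0: "\<not> E b c" and n1: "\<not> E b d" and n2: "\<not> E c d"
  shows False
proof -
  have "has_induced V E 4 claw"
    apply (rule hasI[of "[a,b,c,d]"])
    using D apply simp
    using S apply simp
     apply simp
    apply (simp only: all4 all5 all6 nth_Cons_0 nth_Cons_numeral)
    using p0 p0[THEN symE[OF G]] p1 p1[THEN symE[OF G]] p2 p2[THEN symE[OF G]] n0 nsym[OF G n0] n1 nsym[OF G n1] n2 nsym[OF G n2] irrE[OF G] by (simp add: claw_def sym_edges_def)
  thus False using G unfolding in_class_C_def by blast
qed

lemma no_4K1:
  assumes G: "in_class_C V E" and D: "distinct [a,b,c,d]" and S: "set [a,b,c,d] \<subseteq> V"
    and n0: "\<not> E a b" and n1: "\<not> E a c" and n2: "\<not> E a d" and n3: "\<not> E b c" and n4: "\<not> E b d" and n5: "\<not> E c d"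
  shows False
proof -
  have "has_induced V E 4 fourK1"
    apply (rule hasI[of "[a,b,c,d]"])
    using D apply simp
    using S apply simp
     apply simp
    apply (simp only: all4 all5 all6 nth_Cons_0 nth_Cons_numeral)
    using n0 nsym[OF G n0] n1 nsym[OF G n1] n2 nsym[OF G n2] n3 nsym[OF G n3] n4 nsym[OF G n4] n5 nsym[OF G n5] irrE[OF G] by (simp add: fourK1_def sym_edges_def)
  thus False using G unfolding in_class_C_def by blast
qed

lemma no_K5e:
  assumes G: "in_class_C V E" and D: "distinct [a,b,c,d,e]" and S: "set [a,b,c,d,e] \<subseteq> V"
    and p0: "E a c" and p1: "E a d" and p2: "E a e" and p3: "E b c" and p4: "E b d" and p5: "E b e" and p6: "E c d" and p7: "E c e" and p8: "E d e" and n0: "\<not> E a b"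
  shows False
proof -
  have "has_induced V E 5 K5_minus_e"
    apply (rule hasI[of "[a,b,c,d,e]"])
    using D apply simp
    using S apply simp
     apply simp
    apply (simp only: all4 all5 all6 nth_Cons_0 nth_Cons_numeral)
    using p0 p0[THEN symE[OF G]] p1 p1[THEN symE[OF G]] p2 p2[THEN symE[OF G]] p3 p3[THEN symE[OF G]] p4 p4[THEN symE[OF G]] p5 p5[THEN symE[OF G]] p6 p6[THEN symE[OF G]] p7 p7[THEN symE[OF G]] p8 p8[THEN symE[OF G]] n0 nsym[OF G n0] irrE[OF G] by (simp add: K5_minus_e_def sym_edges_def)
  thus False using G unfolding in_class_C_def by blast
qed

lemma no_P5t:
  assumes G: "in_class_C V E" and D: "distinct [a,b,c,d,e,f]" and S: "set [a,b,c,d,e,f] \<subseteq> V"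
    and p0: "E a b" and p1: "E b c" and p2: "E c d" and p3: "E d e" and p4: "E f b" and p5: "E f c" and p6: "E f d" and n0: "\<not> E a c" and n1: "\<not> E a d" and n2: "\<not> E a e" and n3: "\<not> E a f" and n4: "\<not> E b d" and n5: "\<not> E b e" and n6: "\<not> E c e" and n7: "\<not> E e f"
  shows False
proof -
  have "has_induced V E 6 P5_twin"
    apply (rule hasI[of "[a,b,c,d,e,f]"])
    using D apply simp
    using S apply simp
     apply simp
    apply (simp only: all4 all5 all6 nth_Cons_0 nth_Cons_numeral)
    using p0 p0[THEN symE[OF G]] p1 p1[THEN symE[OF G]] p2 p2[THEN symE[OF G]] p3 p3[THEN symE[OF G]] p4 p4[THEN symE[OF G]] p5 p5[THEN symE[OF G]] p6 p6[THEN symE[OF G]] n0 nsym[OF G n0] n1 nsym[OF G n1] n2 nsym[OF G n2] n3 nsym[OF G n3] n4 nsym[OF G n4] n5 nsym[OF G n5] n6 nsym[OF G n6] n7 nsym[OF G n7] irrE[OF G] by (simp add: P5_twin_def sym_edges_def)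
  thus False using G unfolding in_class_C_def by blast
qed




lemma cycF:
  assumes C: "induced_C5 V E c"
  shows "c 0 \<in> V \<and> c 1 \<in> V \<and> c 2 \<in> V \<and> c 3 \<in> V \<and> c 4 \<in> V
   \<and> c 0 \<noteq> c 1 \<and> c 0 \<noteq> c 2 \<and> c 0 \<noteq> c 3 \<and> c 0 \<noteq> c 4 \<and> c 1 \<noteq> c 2
   \<and> c 1 \<noteq> c 3 \<and> c 1 \<noteq> c 4 \<and> c 2 \<noteq> c 3 \<and> c 2 \<noteq> c 4 \<and> c 3 \<noteq> c 4
   \<and> c 1 \<noteq> c 0 \<and> c 2 \<noteq> c 0 \<and> c 3 \<noteq> c 0 \<and> c 4 \<noteq> c 0 \<and> c 2 \<noteq> c 1
   \<and> c 3 \<noteq> c 1 \<and> c 4 \<noteq> c 1 \<and> c 3 \<noteq> c 2 \<and> c 4 \<noteq> c 2 \<and> c 4 \<noteq> c 3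
   \<and> E (c 0) (c 1) \<and> E (c 1) (c 2) \<and> E (c 2) (c 3) \<and> E (c 3) (c 4) \<and> E (c 4) (c 0)
   \<and> E (c 1) (c 0) \<and> E (c 2) (c 1) \<and> E (c 3) (c 2) \<and> E (c 4) (c 3) \<and> E (c 0) (c 4)
   \<and> \<not> E (c 0) (c 2) \<and> \<not> E (c 0) (c 3) \<and> \<not> E (c 1) (c 3) \<and> \<not> E (c 1) (c 4) \<and> \<not> E (c 2) (c 4)
   \<and> \<not> E (c 2) (c 0) \<and> \<not> E (c 3) (c 0) \<and> \<not> E (c 3) (c 1) \<and> \<not> E (c 4) (c 1) \<and> \<not> E (c 4) (c 2)"
proof -
  have inj: "inj_on c {..<5}" and sub: "c ` {..<5} \<subseteq> V"
    and adj: "\<forall>i<5. \<forall>j<5. E (c i) (c j) \<longleftrightarrow> (j = (i + 1) mod 5 \<or> i = (j + 1) mod 5)"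
    using C unfolding induced_C5_def by auto
  have ne: "\<And>i j. i < 5 \<Longrightarrow> j < 5 \<Longrightarrow> i \<noteq> j \<Longrightarrow> c i \<noteq> c j"
    using inj unfolding inj_on_def by auto
  have inV: "\<And>i. i < 5 \<Longrightarrow> c i \<in> V" using sub by auto
  have adj': "\<And>i j. i < 5 \<Longrightarrow> j < 5 \<Longrightarrow> E (c i) (c j) \<longleftrightarrow> (j = (i + 1) mod 5 \<or> i = (j + 1) mod 5)"
    using adj by blast
  show ?thesis
    using ne[of 0 1] ne[of 0 2] ne[of 0 3] ne[of 0 4] ne[of 1 2] ne[of 1 3] ne[of 1 4]
      ne[of 2 3] ne[of 2 4] ne[of 3 4] ne[of 1 0] ne[of 2 0] ne[of 3 0] ne[of 4 0] ne[of 2 1] ne[of 3 1] ne[of 4 1]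
      ne[of 3 2] ne[of 4 2] ne[of 4 3] inV[of 0] inV[of 1] inV[of 2] inV[of 3] inV[of 4]
      adj'[of 0 1] adj'[of 1 2] adj'[of 2 3] adj'[of 3 4] adj'[of 4 0]
      adj'[of 1 0] adj'[of 2 1] adj'[of 3 2] adj'[of 4 3] adj'[of 0 4]
      adj'[of 0 2] adj'[of 0 3] adj'[of 1 3] adj'[of 1 4] adj'[of 2 4]
      adj'[of 2 0] adj'[of 3 0] adj'[of 3 1] adj'[of 4 1] adj'[of 4 2]
    by simp
qed

lemma XF:
  assumes C: "induced_C5 V E c" and v: "v \<in> Xset V E c m" and n: "n < 5"
  shows "v \<in> V" "v \<noteq> c n" "E v (c n) \<longleftrightarrow> (n = m mod 5 \<or> n = Suc m mod 5)"
proof -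
  have inj: "inj_on c {..<5}" using C unfolding induced_C5_def by auto
  have vv: "v \<in> V - c ` {..<5}" and nb: "{u \<in> c ` {..<5}. E v u} = {c (m mod 5), c ((m + 1) mod 5)}"
    using v unfolding Xset_def by auto
  show "v \<in> V" "v \<noteq> c n" using vv n by auto
  have cn: "c n \<in> c ` {..<5}" using n by auto
  have "E v (c n) \<longleftrightarrow> c n \<in> {c (m mod 5), c ((m + 1) mod 5)}"
    using nb cn by blast
  also have "\<dots> \<longleftrightarrow> (n = m mod 5 \<or> n = Suc m mod 5)"
    using inj n unfolding inj_on_def by auto
  finally show "E v (c n) \<longleftrightarrow> (n = m mod 5 \<or> n = Suc m mod 5)" .
qed

lemma XF5:
  assumes G: "in_class_C V E" and C: "induced_C5 V E c" and v: "v \<in> Xset V E c m"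
  shows "v \<in> V \<and> v \<noteq> c 0 \<and> v \<noteq> c 1 \<and> v \<noteq> c 2 \<and> v \<noteq> c 3 \<and> v \<noteq> c 4
    \<and> (E v (c 0) \<longleftrightarrow> (0 = m mod 5 \<or> 0 = Suc m mod 5))
    \<and> (E v (c 1) \<longleftrightarrow> (1 = m mod 5 \<or> 1 = Suc m mod 5))
    \<and> (E v (c 2) \<longleftrightarrow> (2 = m mod 5 \<or> 2 = Suc m mod 5))
    \<and> (E v (c 3) \<longleftrightarrow> (3 = m mod 5 \<or> 3 = Suc m mod 5))
    \<and> (E v (c 4) \<longleftrightarrow> (4 = m mod 5 \<or> 4 = Suc m mod 5))
    \<and> (E (c 0) v \<longleftrightarrow> (0 = m mod 5 \<or> 0 = Suc m mod 5))
    \<and> (E (c 1) v \<longleftrightarrow> (1 = m mod 5 \<or> 1 = Suc m mod 5))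
    \<and> (E (c 2) v \<longleftrightarrow> (2 = m mod 5 \<or> 2 = Suc m mod 5))
    \<and> (E (c 3) v \<longleftrightarrow> (3 = m mod 5 \<or> 3 = Suc m mod 5))
    \<and> (E (c 4) v \<longleftrightarrow> (4 = m mod 5 \<or> 4 = Suc m mod 5))"
proof -
  have s: "\<And>u. E u v \<longleftrightarrow> E v u" using symE[OF G] by blast
  show ?thesis
    unfolding s using XF[OF C v, of 0] XF[OF C v, of 1] XF[OF C v, of 2] XF[OF C v, of 3] XF[OF C v, of 4]
    by simp
qed

lemma X0F: "in_class_C V E \<Longrightarrow> induced_C5 V E c \<Longrightarrow> v \<in> Xset V E c 0 \<Longrightarrow>
  v \<in> V \<and> v \<noteq> c 0 \<and> v \<noteq> c 1 \<and> v \<noteq> c 2 \<and> v \<noteq> c 3 \<and> v \<noteq> c 4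
  \<and> c 0 \<noteq> v \<and> c 1 \<noteq> v \<and> c 2 \<noteq> v \<and> c 3 \<noteq> v \<and> c 4 \<noteq> v \<and> E v (c 0) \<and> E v (c 1) \<and> \<not> E v (c 2) \<and> \<not> E v (c 3) \<and> \<not> E v (c 4)
  \<and> E (c 0) v \<and> E (c 1) v \<and> \<not> E (c 2) v \<and> \<not> E (c 3) v \<and> \<not> E (c 4) v"
  using XF5[of V E c v 0] by (simp, metis)

lemma X1F: "in_class_C V E \<Longrightarrow> induced_C5 V E c \<Longrightarrow> v \<in> Xset V E c 1 \<Longrightarrow>
  v \<in> V \<and> v \<noteq> c 0 \<and> v \<noteq> c 1 \<and> v \<noteq> c 2 \<and> v \<noteq> c 3 \<and> v \<noteq> c 4
  \<and> c 0 \<noteq> v \<and> c 1 \<noteq> v \<and> c 2 \<noteq> v \<and> c 3 \<noteq> v \<and> c 4 \<noteq> v \<and> \<not> E v (c 0) \<and> E v (c 1) \<and> E v (c 2) \<and> \<not> E v (c 3) \<and> \<not> E v (c 4)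
  \<and> \<not> E (c 0) v \<and> E (c 1) v \<and> E (c 2) v \<and> \<not> E (c 3) v \<and> \<not> E (c 4) v"
  using XF5[of V E c v 1] by (simp, metis)

lemma X2F: "in_class_C V E \<Longrightarrow> induced_C5 V E c \<Longrightarrow> v \<in> Xset V E c 2 \<Longrightarrow>
  v \<in> V \<and> v \<noteq> c 0 \<and> v \<noteq> c 1 \<and> v \<noteq> c 2 \<and> v \<noteq> c 3 \<and> v \<noteq> c 4
  \<and> c 0 \<noteq> v \<and> c 1 \<noteq> v \<and> c 2 \<noteq> v \<and> c 3 \<noteq> v \<and> c 4 \<noteq> v \<and> \<not> E v (c 0) \<and> \<not> E v (c 1) \<and> E v (c 2) \<and> E v (c 3) \<and> \<not> E v (c 4)
  \<and> \<not> E (c 0) v \<and> \<not> E (c 1) v \<and> E (c 2) v \<and> E (c 3) v \<and> \<not> E (c 4) v"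
  using XF5[of V E c v 2] by (simp, metis)




definition rot1 :: "(nat \<Rightarrow> 'a) \<Rightarrow> nat \<Rightarrow> 'a" where
  "rot1 c = (\<lambda>n. c (Suc n mod 5))"

lemma lt5: "{..<5::nat} = {0,1,2,3,4}" by auto

lemma rv: "rot1 c 0 = c 1" "rot1 c 1 = c 2" "rot1 c 2 = c 3" "rot1 c 3 = c 4" "rot1 c 4 = c 0"
proof -
  have h: "Suc 0 mod 5 = (1::nat)" "Suc 1 mod 5 = (2::nat)" "Suc 2 mod 5 = (3::nat)"
    "Suc 3 mod 5 = (4::nat)" "Suc 4 mod 5 = (0::nat)" by simp_all
  show "rot1 c 0 = c 1" "rot1 c 1 = c 2" "rot1 c 2 = c 3" "rot1 c 3 = c 4" "rot1 c 4 = c 0"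
    by (simp only: rot1_def h)+
qed

lemma rv1: "rot1 c (Suc 0) = c 2"
proof -
  have h: "Suc (Suc 0) mod 5 = (2::nat)" by simp
  show ?thesis by (simp only: rot1_def h)
qed

lemma rot1_img: "rot1 c ` {..<5} = c ` {..<5}"
  unfolding lt5 by (auto simp: rv rv1)

lemma sh_inj: "inj_on (\<lambda>n::nat. Suc n mod 5) {..<5}"
  unfolding inj_on_def by (auto simp: mod_Suc)

lemma rot1_ind: assumes C: "induced_C5 V E c" shows "induced_C5 V E (rot1 c)"
proof -
  have inj: "inj_on c {..<5}" and sub: "c ` {..<5} \<subseteq> V"
    and adj: "\<forall>i<5. \<forall>j<5. E (c i) (c j) \<longleftrightarrow> (j = (i + 1) mod 5 \<or> i = (j + 1) mod 5)"
    using C unfolding induced_C5_def by auto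
  have "inj_on (rot1 c) {..<5}"
  proof -
    have "(\<lambda>n::nat. Suc n mod 5) ` {..<5} \<subseteq> {..<5}" by auto
    hence "inj_on c ((\<lambda>n::nat. Suc n mod 5) ` {..<5})" using inj inj_on_subset by blast
    hence "inj_on (c \<circ> (\<lambda>n::nat. Suc n mod 5)) {..<5}" using sh_inj comp_inj_on by blast
    thus ?thesis unfolding rot1_def comp_def .
  qed
  moreover have "rot1 c ` {..<5} \<subseteq> V" using sub rot1_img by metis
  moreover have "\<forall>i<5. \<forall>j<5. E (rot1 c i) (rot1 c j) \<longleftrightarrow> (j = (i + 1) mod 5 \<or> i = (j + 1) mod 5)"
    using adj unfolding all5 by (simp add: rv rv1)
  ultimately show ?thesis unfolding induced_C5_def by blast
qed

lemma rot1_X: "Xset V E (rot1 c) m = Xset V E c (Suc m)"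
proof -
  have "rot1 c (m mod 5) = c (Suc m mod 5)" unfolding rot1_def by (simp add: mod_Suc_eq)
  moreover have "rot1 c ((m + 1) mod 5) = c ((Suc m + 1) mod 5)" unfolding rot1_def by (simp add: mod_Suc_eq)
  ultimately show ?thesis unfolding Xset_def rot1_img by simp
qed

lemma rotn_ind: "induced_C5 V E c \<Longrightarrow> induced_C5 V E ((rot1 ^^ r) c)"
  by (induction r) (auto intro: rot1_ind)

lemma rotn_X: "Xset V E ((rot1 ^^ r) c) m = Xset V E c (m + r)"
  by (induction r arbitrary: m) (auto simp: rot1_X)




lemma clique0:
  assumes G: "in_class_C V E" and C: "induced_C5 V E c"
    and x: "x \<in> Xset V E c 0" and x': "x' \<in> Xset V E c 0" and ne: "x \<noteq> x'"
  shows "E x x'"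
proof (rule ccontr)
  assume h: "\<not> E x x'"
  note F = cycF[OF C] X0F[OF G C x] X0F[OF G C x']
  show False
    by (rule no_claw[OF G, of "c 0" "c 4" x x']) (use F h ne in simp_all)
qed

lemma cliqueM:
  assumes G: "in_class_C V E" and C: "induced_C5 V E c"
    and x: "x \<in> Xset V E c m" and x': "x' \<in> Xset V E c m" and ne: "x \<noteq> x'"
  shows "E x x'"
proof -
  have "Xset V E ((rot1 ^^ m) c) 0 = Xset V E c m" using rotn_X[of V E m c 0] by simp
  thus ?thesis using clique0[OF G rotn_ind[OF C, of m] _ _ ne] x x' by simp
qed

lemma lemB:
  assumes G: "in_class_C V E" and C: "induced_C5 V E c"
    and x: "x \<in> Xset V E c 0" and x': "x' \<in> Xset V E c 0" and ne: "x \<noteq> x'"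
    and y: "y \<in> Xset V E c 1" and e1: "E y x" and e2: "E y x'"
  shows False
proof -
  note F = cycF[OF C] X0F[OF G C x] X0F[OF G C x'] X1F[OF G C y]
  have xx: "E x x'" by (rule clique0[OF G C x x' ne])
  have "y \<noteq> x" "y \<noteq> x'" using F by auto
  show False
    by (rule no_K5e[OF G, of y "c 0" "c 1" x x']) (use F xx e1 e2 ne \<open>y \<noteq> x\<close> \<open>y \<noteq> x'\<close> in simp_all)
qed

lemma lemB':
  assumes G: "in_class_C V E" and C: "induced_C5 V E c"
    and y: "y \<in> Xset V E c 1" and y': "y' \<in> Xset V E c 1" and ne: "y \<noteq> y'"
    and x: "x \<in> Xset V E c 0" and e1: "E x y" and e2: "E x y'"
  shows False
proof -
  note F = cycF[OF C] X1F[OF G C y] X1F[OF G C y'] X0F[OF G C x]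
  have yy: "E y y'" by (rule cliqueM[OF G C y y' ne])
  have "x \<noteq> y" "x \<noteq> y'" using F by auto
  show False
    by (rule no_K5e[OF G, of x "c 2" "c 1" y y']) (use F yy e1 e2 ne \<open>x \<noteq> y\<close> \<open>x \<noteq> y'\<close> in simp_all)
qed

lemma lemD:
  assumes G: "in_class_C V E" and C: "induced_C5 V E c"
    and x: "x \<in> Xset V E c 0" and x': "x' \<in> Xset V E c 0" and ne: "x \<noteq> x'"
    and z: "z \<in> Xset V E c 2" and e1: "E z x" and e2: "E z x'"
  shows False
proof -
  note F = cycF[OF C] X0F[OF G C x] X0F[OF G C x'] X2F[OF G C z]
  have xx: "E x' x" by (rule cliqueM[OF G C x' x ne[symmetric]])
  have e1': "E x z" using symE[OF G e1] .
  have "z \<noteq> x" "z \<noteq> x'" using F by auto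
  show False
    by (rule no_P5t[OF G, of "c 4" "c 0" x z "c 2" x']) (use F xx e1' e2 symE[OF G e2] ne \<open>z \<noteq> x\<close> \<open>z \<noteq> x'\<close> in simp_all)
qed

lemma lemD':
  assumes G: "in_class_C V E" and C: "induced_C5 V E c"
    and z: "z \<in> Xset V E c 2" and z': "z' \<in> Xset V E c 2" and ne: "z \<noteq> z'"
    and x: "x \<in> Xset V E c 0" and e1: "E x z" and e2: "E x z'"
  shows False
proof -
  note F = cycF[OF C] X2F[OF G C z] X2F[OF G C z'] X0F[OF G C x]
  have zz: "E z' z" by (rule cliqueM[OF G C z' z ne[symmetric]])
  have e1': "E z x" using symE[OF G e1] .
  have e2': "E z' x" using symE[OF G e2] .
  have "z \<noteq> x" "z' \<noteq> x" using F by auto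
  show False
    by (rule no_P5t[OF G, of "c 4" "c 3" z x "c 1" z']) (use F zz e1' e2' ne \<open>z \<noteq> x\<close> \<open>z' \<noteq> x\<close> in simp_all)
qed

lemma lemT:
  assumes G: "in_class_C V E" and C: "induced_C5 V E c"
    and x: "x \<in> Xset V E c 0" and y: "y \<in> Xset V E c 1" and z: "z \<in> Xset V E c 2"
    and n1: "\<not> E x y" and n2: "\<not> E y z"
  shows "E x z"
proof (rule ccontr)
  assume n3: "\<not> E x z"
  note F = cycF[OF C] X0F[OF G C x] X1F[OF G C y] X2F[OF G C z]
  have "x \<noteq> y" "x \<noteq> z" "y \<noteq> z" using F by auto
  show False
    by (rule no_4K1[OF G, of x y z "c 4"]) (use F n1 n2 n3 \<open>x \<noteq> y\<close> \<open>x \<noteq> z\<close> \<open>y \<noteq> z\<close> in simp_all)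
qed

lemma rot1X: "Xset V E (rot1 c) 0 = Xset V E c 1" "Xset V E (rot1 c) 1 = Xset V E c 2"
  using rot1_X[of V E c 0] rot1_X[of V E c 1] by (simp_all add: numeral_2_eq_2)

lemma lemB1:
  assumes G: "in_class_C V E" and C: "induced_C5 V E c"
    and y: "y \<in> Xset V E c 1" and y': "y' \<in> Xset V E c 1" and ne: "y \<noteq> y'"
    and z: "z \<in> Xset V E c 2" and e1: "E z y" and e2: "E z y'"
  shows False
proof -
  have a: "y \<in> Xset V E (rot1 c) 0" using y unfolding rot1X(1) .
  have b: "y' \<in> Xset V E (rot1 c) 0" using y' unfolding rot1X(1) .
  have d: "z \<in> Xset V E (rot1 c) 1" using z unfolding rot1X(2) .
  show False by (rule lemB[OF G rot1_ind[OF C] a b ne d e1 e2])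
qed

lemma lemB1':
  assumes G: "in_class_C V E" and C: "induced_C5 V E c"
    and z: "z \<in> Xset V E c 2" and z': "z' \<in> Xset V E c 2" and ne: "z \<noteq> z'"
    and y: "y \<in> Xset V E c 1" and e1: "E y z" and e2: "E y z'"
  shows False
proof -
  have a: "z \<in> Xset V E (rot1 c) 1" using z unfolding rot1X(2) .
  have b: "z' \<in> Xset V E (rot1 c) 1" using z' unfolding rot1X(2) .
  have d: "y \<in> Xset V E (rot1 c) 0" using y unfolding rot1X(1) .
  show False by (rule lemB'[OF G rot1_ind[OF C] a b ne d e1 e2])
qed




lemma main0:
  assumes G: "in_class_C V E" and C: "induced_C5 V E c"
    and a1: "a1 \<in> Xset V E c 0" and a2: "a2 \<in> Xset V E c 0" and a3: "a3 \<in> Xset V E c 0"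
    and d12: "a1 \<noteq> a2" and d13: "a1 \<noteq> a3" and d23: "a2 \<noteq> a3"
    and y: "y \<in> Xset V E c 1" and z: "z \<in> Xset V E c 2"
  shows "E y z"
proof (rule ccontr)
  assume n: "\<not> E y z"
  have sy: "\<And>u. E u y = E y u" and sz: "\<And>u. E u z = E z u" using symE[OF G] by blast+
  have b12: "\<not> (E y a1 \<and> E y a2)" using lemB[OF G C a1 a2 d12 y] by blast
  have b13: "\<not> (E y a1 \<and> E y a3)" using lemB[OF G C a1 a3 d13 y] by blast
  have b23: "\<not> (E y a2 \<and> E y a3)" using lemB[OF G C a2 a3 d23 y] by blast
  have t1: "\<not> E y a1 \<Longrightarrow> E z a1" using lemT[OF G C a1 y z _ n] sy sz by metis
  have t2: "\<not> E y a2 \<Longrightarrow> E z a2" using lemT[OF G C a2 y z _ n] sy sz by metis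
  have t3: "\<not> E y a3 \<Longrightarrow> E z a3" using lemT[OF G C a3 y z _ n] sy sz by metis
  have D12: "\<not> (E z a1 \<and> E z a2)" using lemD[OF G C a1 a2 d12 z] by blast
  have D13: "\<not> (E z a1 \<and> E z a3)" using lemD[OF G C a1 a3 d13 z] by blast
  have D23: "\<not> (E z a2 \<and> E z a3)" using lemD[OF G C a2 a3 d23 z] by blast
  show False using b12 b13 b23 t1 t2 t3 D12 D13 D23 by blast
qed

lemma main1:
  assumes G: "in_class_C V E" and C: "induced_C5 V E c"
    and a1: "a1 \<in> Xset V E c 1" and a2: "a2 \<in> Xset V E c 1" and a3: "a3 \<in> Xset V E c 1"
    and d12: "a1 \<noteq> a2" and d13: "a1 \<noteq> a3" and d23: "a2 \<noteq> a3"
    and x: "x \<in> Xset V E c 0" and z: "z \<in> Xset V E c 2"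
  shows "E x z"
proof (rule ccontr)
  assume n: "\<not> E x z"
  have sx: "\<And>u. E u x = E x u" and sz: "\<And>u. E u z = E z u" using symE[OF G] by blast+
  have b12: "\<not> (E x a1 \<and> E x a2)" using lemB'[OF G C a1 a2 d12 x] by blast
  have b13: "\<not> (E x a1 \<and> E x a3)" using lemB'[OF G C a1 a3 d13 x] by blast
  have b23: "\<not> (E x a2 \<and> E x a3)" using lemB'[OF G C a2 a3 d23 x] by blast
  have D12: "\<not> (E z a1 \<and> E z a2)" using lemB1[OF G C a1 a2 d12 z] by blast
  have D13: "\<not> (E z a1 \<and> E z a3)" using lemB1[OF G C a1 a3 d13 z] by blast
  have D23: "\<not> (E z a2 \<and> E z a3)" using lemB1[OF G C a2 a3 d23 z] by blast
  have t1: "\<not> E x a1 \<Longrightarrow> \<not> E z a1 \<Longrightarrow> False" using lemT[OF G C x a1 z] n sz by metis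
  have t2: "\<not> E x a2 \<Longrightarrow> \<not> E z a2 \<Longrightarrow> False" using lemT[OF G C x a2 z] n sz by metis
  have t3: "\<not> E x a3 \<Longrightarrow> \<not> E z a3 \<Longrightarrow> False" using lemT[OF G C x a3 z] n sz by metis
  show False using b12 b13 b23 t1 t2 t3 D12 D13 D23 by blast
qed

lemma main2:
  assumes G: "in_class_C V E" and C: "induced_C5 V E c"
    and a1: "a1 \<in> Xset V E c 2" and a2: "a2 \<in> Xset V E c 2" and a3: "a3 \<in> Xset V E c 2"
    and d12: "a1 \<noteq> a2" and d13: "a1 \<noteq> a3" and d23: "a2 \<noteq> a3"
    and x: "x \<in> Xset V E c 0" and y: "y \<in> Xset V E c 1"
  shows "E x y"
proof (rule ccontr)
  assume n: "\<not> E x y"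
  have b12: "\<not> (E x a1 \<and> E x a2)" using lemD'[OF G C a1 a2 d12 x] by blast
  have b13: "\<not> (E x a1 \<and> E x a3)" using lemD'[OF G C a1 a3 d13 x] by blast
  have b23: "\<not> (E x a2 \<and> E x a3)" using lemD'[OF G C a2 a3 d23 x] by blast
  have D12: "\<not> (E y a1 \<and> E y a2)" using lemB1'[OF G C a1 a2 d12 y] by blast
  have D13: "\<not> (E y a1 \<and> E y a3)" using lemB1'[OF G C a1 a3 d13 y] by blast
  have D23: "\<not> (E y a2 \<and> E y a3)" using lemB1'[OF G C a2 a3 d23 y] by blast
  have t1: "\<not> E y a1 \<Longrightarrow> E x a1" using lemT[OF G C x y a1 n] by blast
  have t2: "\<not> E y a2 \<Longrightarrow> E x a2" using lemT[OF G C x y a2 n] by blast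
  have t3: "\<not> E y a3 \<Longrightarrow> E x a3" using lemT[OF G C x y a3 n] by blast
  show False using b12 b13 b23 t1 t2 t3 D12 D13 D23 by blast
qed

lemma three:
  assumes "finite A" "card A \<ge> 3"
  obtains a1 a2 a3 where "a1 \<in> A" "a2 \<in> A" "a3 \<in> A" "a1 \<noteq> a2" "a1 \<noteq> a3" "a2 \<noteq> a3"
proof -
  obtain B where "B \<subseteq> A" "card B = 3" using obtain_subset_with_card_n[OF assms(2)] by blast
  then obtain x y z where "B = {x,y,z}" "x \<noteq> y" "y \<noteq> z" "x \<noteq> z" using card_3_iff by metis
  thus ?thesis using that \<open>B \<subseteq> A\<close> by auto
qed

lemma card1: "A \<noteq> {} \<Longrightarrow> \<forall>a\<in>A. \<forall>b\<in>A. a = b \<Longrightarrow> card A = 1"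
proof -
  assume "A \<noteq> {}" "\<forall>a\<in>A. \<forall>b\<in>A. a = b"
  then obtain a where "a \<in> A" by blast
  hence "A = {a}" using \<open>\<forall>a\<in>A. \<forall>b\<in>A. a = b\<close> by blast
  thus ?thesis by simp
qed

lemma base:
  assumes G: "in_class_C V E" and C: "induced_C5 V E c"
    and ne0: "Xset V E c 0 \<noteq> {}" and ne1: "Xset V E c 1 \<noteq> {}" and ne2: "Xset V E c 2 \<noteq> {}"
    and m: "m \<in> {0,1,2}" and m': "m' \<in> {0,1,2}" and mm: "m \<noteq> m'"
    and big: "card (Xset V E c m) \<ge> 3"
  shows "card (Xset V E c m') = 1"
proof -
  have fin: "\<And>j. finite (Xset V E c j)"
    using G unfolding in_class_C_def graph_def Xset_def by auto
  obtain a1 a2 a3 where a: "a1 \<in> Xset V E c m" "a2 \<in> Xset V E c m" "a3 \<in> Xset V E c m"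
    "a1 \<noteq> a2" "a1 \<noteq> a3" "a2 \<noteq> a3" using three[OF fin big] by blast
  obtain x where x: "x \<in> Xset V E c 0" using ne0 by blast
  obtain y where y: "y \<in> Xset V E c 1" using ne1 by blast
  obtain z where z: "z \<in> Xset V E c 2" using ne2 by blast
  have sy: "\<And>u. E u y = E y u" and sz: "\<And>u. E u z = E z u" and sx: "\<And>u. E u x = E x u"
    using symE[OF G] by blast+
  have u0: "\<forall>p\<in>Xset V E c 0. \<forall>q\<in>Xset V E c 0. p = q" if "m \<noteq> 0" "m' = 0"
  proof (intro ballI, rule ccontr)
    fix p q assume p: "p \<in> Xset V E c 0" and q: "q \<in> Xset V E c 0" and pq: "p \<noteq> q"
    have "m = 1 \<or> m = 2" using m that by auto
    thus False
    proof
      assume "m = 1"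
      hence "E p z" "E q z" using main1[OF G C _ _ _ a(4-6) _ z] a p q by auto
      thus False using lemD[OF G C p q pq z] sz by metis
    next
      assume "m = 2"
      hence "E p y" "E q y" using main2[OF G C _ _ _ a(4-6) _ y] a p q by auto
      thus False using lemB[OF G C p q pq y] sy by metis
    qed
  qed
  have u1: "\<forall>p\<in>Xset V E c 1. \<forall>q\<in>Xset V E c 1. p = q" if "m \<noteq> 1" "m' = 1"
  proof (intro ballI, rule ccontr)
    fix p q assume p: "p \<in> Xset V E c 1" and q: "q \<in> Xset V E c 1" and pq: "p \<noteq> q"
    have "m = 0 \<or> m = 2" using m that by auto
    thus False
    proof
      assume "m = 0"
      hence "E p z" "E q z" using main0[OF G C _ _ _ a(4-6) _ z] a p q by auto
      thus False using lemB1[OF G C p q pq z] sz by metis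
    next
      assume "m = 2"
      hence "E x p" "E x q" using main2[OF G C _ _ _ a(4-6) x] a p q by auto
      thus False using lemB'[OF G C p q pq x] by metis
    qed
  qed
  have u2: "\<forall>p\<in>Xset V E c 2. \<forall>q\<in>Xset V E c 2. p = q" if "m \<noteq> 2" "m' = 2"
  proof (intro ballI, rule ccontr)
    fix p q assume p: "p \<in> Xset V E c 2" and q: "q \<in> Xset V E c 2" and pq: "p \<noteq> q"
    have "m = 0 \<or> m = 1" using m that by auto
    thus False
    proof
      assume "m = 0"
      hence "E y p" "E y q" using main0[OF G C _ _ _ a(4-6) y] a p q by auto
      thus False using lemB1'[OF G C p q pq y] by metis
    next
      assume "m = 1"
      hence "E x p" "E x q" using main1[OF G C _ _ _ a(4-6) x] a p q by auto
      thus False using lemD'[OF G C p q pq x] by metis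
    qed
  qed
  have "m' = 0 \<or> m' = 1 \<or> m' = 2" using m' by auto
  thus ?thesis
  proof (elim disjE)
    assume h: "m' = 0"
    show ?thesis unfolding h by (rule card1[OF ne0 u0]) (use mm h in auto)
  next
    assume h: "m' = 1"
    show ?thesis unfolding h by (rule card1[OF ne1 u1]) (use mm h in auto)
  next
    assume h: "m' = 2"
    show ?thesis unfolding h by (rule card1[OF ne2 u2]) (use mm h in auto)
  qed
qed




lemma Xset_mod: "Xset V E c (j mod 5) = Xset V E c j"
  unfolding Xset_def by (simp add: mod_Suc_eq)

theorem claim19:
  fixes V :: "'a set" and E :: "'a \<Rightarrow> 'a \<Rightarrow> bool" and c :: "nat \<Rightarrow> 'a" and i :: nat
  assumes "connected_graph V E"
    and "in_class_C V E"
    and "induced_C5 V E c"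
    and "Xset V E c i \<noteq> {}" and "Xset V E c (i + 1) \<noteq> {}" and "Xset V E c (i + 2) \<noteq> {}"
    and "{j, k, l} = {i mod 5, (i + 1) mod 5, (i + 2) mod 5}"
    and "card (Xset V E c j) \<ge> 3"
  shows "card (Xset V E c k) = 1 \<and> card (Xset V E c l) = 1"
proof -
  note G = assms(2) and C = assms(3) and eq = assms(7)
  define d where "d = (rot1 ^^ i) c"
  have D: "induced_C5 V E d" unfolding d_def by (rule rotn_ind[OF C])
  have Xd: "\<And>m. Xset V E d m = Xset V E c (i + m)"
    unfolding d_def rotn_X by (simp add: add.commute)
  have ne0: "Xset V E d 0 \<noteq> {}" using assms(4) Xd[of 0] by simp
  have ne1: "Xset V E d 1 \<noteq> {}" using assms(5) Xd[of 1] by simp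
  have ne2: "Xset V E d 2 \<noteq> {}" using assms(6) Xd[of 2] by simp
  have dist: "i mod 5 \<noteq> (i + 1) mod 5" "i mod 5 \<noteq> (i + 2) mod 5" "(i + 1) mod 5 \<noteq> (i + 2) mod 5"
    by (auto simp: mod_Suc)
  have c3: "card {j, k, l} = 3" unfolding eq using dist by simp
  have jk: "j \<noteq> k" and jl: "j \<noteq> l" using c3 by (auto simp: card_insert_if split: if_splits)
  have rep: "\<And>t. t \<in> {j,k,l} \<Longrightarrow> \<exists>m\<in>{0,1,2::nat}. t = (i + m) mod 5"
  proof -
    fix t assume t: "t \<in> {j,k,l}"
    hence "t \<in> {i mod 5, (i + 1) mod 5, (i + 2) mod 5}" by (simp only: eq)
    hence "t = (i + 0) mod 5 \<or> t = (i + 1) mod 5 \<or> t = (i + 2) mod 5" unfolding add_0_right by blast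
    thus "\<exists>m\<in>{0,1,2::nat}. t = (i + m) mod 5" by blast
  qed
  obtain mj where mj: "mj \<in> {0,1,2}" "j = (i + mj) mod 5" using rep[of j] by blast
  obtain mk where mk: "mk \<in> {0,1,2}" "k = (i + mk) mod 5" using rep[of k] by blast
  obtain ml where ml: "ml \<in> {0,1,2}" "l = (i + ml) mod 5" using rep[of l] by blast
  have XX: "\<And>t m. t = (i + m) mod 5 \<Longrightarrow> Xset V E c t = Xset V E d m"
    using Xd Xset_mod by metis
  have big: "card (Xset V E d mj) \<ge> 3" using assms(8) XX[OF mj(2)] by simp
  have "mj \<noteq> mk" using jk mj mk by auto
  hence "card (Xset V E d mk) = 1" using base[OF G D ne0 ne1 ne2 mj(1) mk(1) _ big] by blast
  moreover have "mj \<noteq> ml" using jl mj ml by auto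
  hence "card (Xset V E d ml) = 1" using base[OF G D ne0 ne1 ne2 mj(1) ml(1) _ big] by blast
  ultimately show ?thesis using XX[OF mk(2)] XX[OF ml(2)] by simp
qed


end
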